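(* Let $\mathcal{MP}_{m,n}$ be any message-passing implementation with $m$ clients and $n$ servers, and let $\mathcal{SM}_m$ be the shared-memory implementation constructed from $\mathcal{MP}_{m,n}$ as described in the context, where the objects $\mathrm{SA}[j][r]$ are correct safe agreement objects. Then $\mathcal{SM}_m$ is a refinement of $\mathcal{MP}_{m,n}$, i.e., there exists a forward simulation from $\mathcal{SM}_m$ to $\mathcal{MP}_{m,n}$.
   Context: Objects and executions. An object implementation is a labeled transition system over global states; some transitions are labeled by a call action $\langle M(x)\rangle_k$ (invocation $k$ of method $M$ with argument $x$) or a return action $\langle y\rangle_k$ (invocation $k$ returns $y$); other transitions are internal. Message-passing implementations. A message is a triple $\langle src,dst,v\rangle$ (sender, destination process, payload); $\mathbb{M}sgs$ is the set of messages and $\mathbb{A}$ the set of call and return actions. A message-passing implementation $\mathcal{MP}_{m,n}$ has client processes $0,\dots,m-1$ and server processes $m,\dots,m+n-1$, a set $\mathbb{Q}$ of local states, an initial local state $s_0$ (used by all processes), and transition functions: for a server $j$, a partial function $\delta_j:\mathbb{Q}\times 2^{\mathbb{M}sgs}\rightharpoonup\mathbb{Q}\times 2^{\mathbb{M}sgs}$; for a client $i$, a partial function $\delta_i:\mathbb{Q}\times(2^{\mathbb{M}sgs}\cup\mathbb{A})\rightharpoonup\mathbb{Q}\times 2^{\mathbb{M}sgs}$. A client state records whether an invocation is pending ($\mathit{pending}_i(s)$). A global state $g$ maps each process to a pair (local state, pool of messages it has sent so far); initially each process has $(s_0,\emptyset)$. Transitions: (call) for a client $i$ with $g(i)=(s,P)$,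 $\mathit{pending}_i(s)=\mathit{false}$ and $\delta_i(s,\langle M(x)\rangle)=(s',Msgs)$, move to $g[i\mapsto(s',P\cup Msgs)]$ with label $\langle M(x)\rangle$; (return) for a client $i$ with $g(i)=(s,P)$ and $\delta_i(s,\langle y\rangle)=(s',Msgs)$, move to $g[i\mapsto(s',P\cup Msgs)]$ with label $\langle y\rangle$; (internal) for any process $j$ with $g(j)=(s,P)$ and any set $Msgs$ of messages with destination $j$ contained in the union of all processes' pools, if $\delta_j(s,Msgs)=(s',Msgs')$, move to $g[j\mapsto(s',P\cup Msgs')]$ unlabeled. Forward simulation and refinement. A forward simulation from object $O_1$ to object $O_2$ is a relation $F$ between states of $O_1$ and $O_2$ containing the pair of initial states such that for every transition $(s_1,a,s_1')$ of $O_1$ and every $s_2$ with $(s_1,s_2)\in F$ there is $s_2'$ with either ($s_2'=s_2$ and $a$ is not a call or return action) or ($(s_1',s_2')\in F$, $(s_2,a',s_2')$ is a transition of $O_2$, and $a=a'$ whenever $a$ is a call or return action). $O_1$ refines $O_2$ if such an $F$ exists. Safe agreement. A safe agreement object has methods $propose(v)$ (returns done) and $resolve()$ (returns a value or $\bot$); each process first invokes $propose$ once, then a sequence of $resolve$ invocations. It is correct if: (Agreement) any two $resolve$ invocations returning non-$\bot$ values return the same value; (Validity) a $resolve$ returning $v\neq\bot$ is preceded by a call $propose(v)$; (Liveness) a $resolve$ invoked when no $propose$ is pending returns a non-$\bot$ value; and both methods are wait-free. The construction $\mathcal{SM}_m$. It runs on shared-memory processes $p_0,\dots,p_{m-1}$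 and uses: single-writer registers $\mathrm{client}[i]$ (written only by $p_i$, holding a local state $.state$ and message pool $.msgs$ of client $i$, initially $(s_0,\emptyset)$); single-writer registers $\mathrm{server}[i][j]$ for $0\le i<m$, $m\le j<m+n$ (written only by $p_i$, holding a state, a pool $.msgs$, and a step number $.sn$, initially $(s_0,\emptyset,0)$); and safe agreement objects $\mathrm{SA}[j][r]$ for each server $j$ and $r\ge1$. Each $p_i$ has persistent local variables $\mathrm{resolved}[j]$ (initially true) and $r[j]$ (initially $0$). Define $\mathrm{actStep}(c,a)=(q, c.msgs\cup Msgs')$ where $\delta_i(c.state,a)=(q,Msgs')$. Define $\mathrm{internalStep}(j)$ at $p_i$: compute $Msgs$ as the set of all messages with destination $j$ in $\mathrm{client}[k].msgs$ for all $0\le k<m$, together with, for each server $k$, the messages with destination $j$ in the pool of the entry among $\mathrm{server}[0..m-1][k]$ (read one by one) having maximal step number; if $j<m$, let $(q,Msgs')=\delta_j(\mathrm{client}[j].state,Msgs)$ and return $(q,\mathrm{client}[j].msgs\cup Msgs')$; otherwise let $(q,Msgs')=\delta_j(\mathrm{server}[i][j].state,Msgs)$ and return $(q,\mathrm{server}[i][j].msgs\cup Msgs')$. A method invocation $M(x)$ at $p_i$ executes: $\mathrm{client}[i]\gets\mathrm{actStep}(\mathrm{client}[i],\langle M(x)\rangle)$; then repeat forever: if $\delta_i(\mathrm{client}[i].state,\langle y\rangle)$ is defined for some $y$, set $\mathrm{client}[i]\gets\mathrm{actStep}(\mathrm{client}[i],\langle y\rangle)$ and return $y$; otherwise set $\mathrm{client}[i]\gets\mathrm{internalStep}(i)$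 and then, for $j=m,\dots,m+n-1$: if $\mathrm{resolved}[j]$, then $s\gets\mathrm{internalStep}(j)$, $r[j]\gets r[j]+1$, $\mathrm{resolved}[j]\gets\mathit{false}$, $\mathrm{SA}[j][r[j]].propose(s)$; else $s\gets\mathrm{SA}[j][r[j]].resolve()$ and, if $s\ne\bot$, set $\mathrm{resolved}[j]\gets\mathit{true}$ and $\mathrm{server}[i][j]\gets\langle s,r[j]\rangle$. *)

theory Defs
  imports Main
begin

text \<open>An object is a labelled transition system given by an initial state and a
transition relation; labels are \<open>None\<close> (internal) or \<open>Some a\<close> with a a call or
return action.\<close>

definition forward_simulation ::
  "('s1 \<Rightarrow> 'l option \<Rightarrow> 's1 \<Rightarrow> bool) \<Rightarrow> 's1 \<Rightarrow>
   ('s2 \<Rightarrow> 'l option \<Rightarrow> 's2 \<Rightarrow> bool) \<Rightarrow> 's2 \<Rightarrow>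
   ('s1 \<Rightarrow> 's2 \<Rightarrow> bool) \<Rightarrow> bool" where
  "forward_simulation T1 i1 T2 i2 F \<longleftrightarrow>
     F i1 i2 \<and>
     (\<forall>s1 a s1' s2. T1 s1 a s1' \<and> F s1 s2 \<longrightarrow>
        (\<exists>s2'. F s1' s2' \<and>
           ((s2' = s2 \<and> a = None) \<or>
            (\<exists>a'. T2 s2 a' s2' \<and> (a \<noteq> None \<longrightarrow> a' = a)))))"

definition refines ::
  "('s1 \<Rightarrow> 'l option \<Rightarrow> 's1 \<Rightarrow> bool) \<Rightarrow> 's1 \<Rightarrow>
   ('s2 \<Rightarrow> 'l option \<Rightarrow> 's2 \<Rightarrow> bool) \<Rightarrow> 's2 \<Rightarrow> bool" where
  "refines T1 i1 T2 i2 \<longleftrightarrow> (\<exists>F. forward_simulation T1 i1 T2 i2 F)"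

datatype ('mth, 'arg, 'ret) act = ACall 'mth 'arg | ARet 'ret

text \<open>A message is a triple (src, dst, payload).\<close>
type_synonym 'v msg = "nat \<times> nat \<times> 'v"

definition dst :: "'v msg \<Rightarrow> nat" where "dst msg = fst (snd msg)"

text \<open>Labels of transitions: the client index performing the call/return action
(identifying the invocation, as each client has at most one pending invocation)
and the action.\<close>
type_synonym ('mth, 'arg, 'ret) lab = "(nat \<times> ('mth, 'arg, 'ret) act) option"

text \<open>The transition functions of all
processes are bundled in \<open>delta\<close>; a server only ever receives inputs \<open>Inl Msgs\<close>,
a client receives \<open>Inl Msgs\<close> or \<open>Inr a\<close> with a call/return action a.\<close>
record ('q, 'v, 'mth, 'arg, 'ret) mp_impl =
  nclients :: nat
  nservers :: nat
  s0 :: 'q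
  delta :: "nat \<Rightarrow> 'q \<Rightarrow> ('v msg set + ('mth, 'arg, 'ret) act) \<Rightarrow> ('q \<times> 'v msg set) option"
  pending :: "nat \<Rightarrow> 'q \<Rightarrow> bool"

type_synonym ('q, 'v) mp_gstate = "nat \<Rightarrow> 'q \<times> 'v msg set"

definition mp_init :: "('q, 'v, 'mth, 'arg, 'ret) mp_impl \<Rightarrow> ('q, 'v) mp_gstate" where
  "mp_init P = (\<lambda>_. (s0 P, {}))"

inductive mp_step :: "('q, 'v, 'mth, 'arg, 'ret) mp_impl \<Rightarrow> ('q, 'v) mp_gstate \<Rightarrow>
    ('mth, 'arg, 'ret) lab \<Rightarrow> ('q, 'v) mp_gstate \<Rightarrow> bool" for P where
  mp_call: "\<lbrakk> i < nclients P; g i = (s, Pl); \<not> pending P i s;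
              delta P i s (Inr (ACall M x)) = Some (s', Ms) \<rbrakk>
            \<Longrightarrow> mp_step P g (Some (i, ACall M x)) (g(i := (s', Pl \<union> Ms)))"
| mp_ret: "\<lbrakk> i < nclients P; g i = (s, Pl);
             delta P i s (Inr (ARet y)) = Some (s', Ms) \<rbrakk>
            \<Longrightarrow> mp_step P g (Some (i, ARet y)) (g(i := (s', Pl \<union> Ms)))"
| mp_internal: "\<lbrakk> j < nclients P + nservers P; g j = (s, Pl);
                  Ms \<subseteq> (\<Union>k < nclients P + nservers P. snd (g k));
                  \<forall>msg \<in> Ms. dst msg = j;
                  delta P j s (Inl Ms) = Some (s', Ms') \<rbrakk>
            \<Longrightarrow> mp_step P g None (g(j := (s', Pl \<union> Ms')))"

definition pending_wf :: "('q, 'v, 'mth, 'arg, 'ret) mp_impl \<Rightarrow> bool" where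
  "pending_wf P \<longleftrightarrow>
     (\<forall>i < nclients P. \<not> pending P i (s0 P)) \<and>
     (\<forall>i < nclients P. \<forall>s y q Ms. delta P i s (Inr (ARet y)) = Some (q, Ms) \<longrightarrow> \<not> pending P i q)"

section \<open>Safe agreement objects (most permissive correct behaviour)\<close>

text \<open>State of one safe agreement object: the values whose propose was invoked,
the processes with a pending propose, the value returned by some resolve so far,
and the processes whose pending resolve was invoked while no propose was pending.\<close>
record 'w sa_state =
  proposed :: "'w set"
  pendP :: "nat set"
  decided :: "'w option"
  liveR :: "nat set"

definition sa_init :: "'w sa_state" where
  "sa_init = \<lparr>proposed = {}, pendP = {}, decided = None, liveR = {}\<rparr>"

text \<open>Program counter of a process p_i (each constructor is the point before one
atomic step).  \<open>RdCl t k acc\<close>: internalStep(t) is about to read client[k], having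
collected the messages \<open>acc\<close>; \<open>RdSv t k i' best acc\<close>: about to read server[i'][k]
where \<open>best\<close> is the (step number, pool) of the entry with maximal step number read so
far for server k; \<open>Compute t acc\<close>: all reads done; \<open>PropRet j\<close>: propose on
SA[j][r[j]] pending; \<open>SvLoop j\<close>: at iteration j of the for loop; \<open>ResRet j\<close>:
resolve pending; \<open>WrSv j s\<close>: about to write server[i][j].\<close>
datatype ('q, 'v) pc =
    Idle
  | Top
  | RdCl nat nat "'v msg set"
  | RdSv nat nat nat "(nat \<times> 'v msg set) option" "'v msg set"
  | Compute nat "'v msg set"
  | PropRet nat
  | SvLoop nat
  | ResRet nat
  | WrSv nat "'q \<times> 'v msg set"

record ('q, 'v) lstate =
  pc :: "('q, 'v) pc"
  resolved :: "nat \<Rightarrow> bool"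
  rnd :: "nat \<Rightarrow> nat"

record ('q, 'v) sm_gstate =
  cl :: "nat \<Rightarrow> 'q \<times> 'v msg set"
  sv :: "nat \<Rightarrow> nat \<Rightarrow> 'q \<times> 'v msg set \<times> nat"
  sa :: "nat \<Rightarrow> nat \<Rightarrow> ('q \<times> 'v msg set) sa_state"
  loc :: "nat \<Rightarrow> ('q, 'v) lstate"

definition sm_init :: "('q, 'v, 'mth, 'arg, 'ret) mp_impl \<Rightarrow> ('q, 'v) sm_gstate" where
  "sm_init P = \<lparr> cl = (\<lambda>_. (s0 P, {})), sv = (\<lambda>_ _. (s0 P, {}, 0)),
                 sa = (\<lambda>_ _. sa_init),
                 loc = (\<lambda>_. \<lparr>pc = Idle, resolved = (\<lambda>_. True), rnd = (\<lambda>_. 0)\<rparr>) \<rparr>"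

definition set_pc :: "nat \<Rightarrow> ('q, 'v) pc \<Rightarrow> ('q, 'v) sm_gstate \<Rightarrow> ('q, 'v) sm_gstate" where
  "set_pc i p G = G\<lparr>loc := (loc G)(i := (loc G i)\<lparr>pc := p\<rparr>)\<rparr>"

definition upd_sa :: "nat \<Rightarrow> nat \<Rightarrow> (('q \<times> 'v msg set) sa_state \<Rightarrow> ('q \<times> 'v msg set) sa_state)
    \<Rightarrow> ('q, 'v) sm_gstate \<Rightarrow> ('q, 'v) sm_gstate" where
  "upd_sa j r f G = G\<lparr>sa := (sa G)(j := (sa G j)(r := f (sa G j r)))\<rparr>"

definition upd_best :: "(nat \<times> 'v msg set) option \<Rightarrow> 'q \<times> 'v msg set \<times> nat
    \<Rightarrow> (nat \<times> 'v msg set) option" where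
  "upd_best best e = (case best of
      None \<Rightarrow> Some (snd (snd e), fst (snd e))
    | Some (b, _) \<Rightarrow> if snd (snd e) > b then Some (snd (snd e), fst (snd e)) else best)"

text \<open>One atomic step of process p_i (each step accesses at most one shared object).\<close>
inductive sm_pstep :: "('q, 'v, 'mth, 'arg, 'ret) mp_impl \<Rightarrow> nat \<Rightarrow> ('q, 'v) sm_gstate \<Rightarrow>
    ('mth, 'arg, 'ret) lab \<Rightarrow> ('q, 'v) sm_gstate \<Rightarrow> bool" for P i where
  \<comment> \<open>invocation M(x): client[i] <- actStep(client[i], <M(x)>)\<close>
  sm_call: "\<lbrakk> pc (loc G i) = Idle; cl G i = (c, Pl);
              delta P i c (Inr (ACall M x)) = Some (q, Ms) \<rbrakk>
     \<Longrightarrow> sm_pstep P i G (Some (i, ACall M x))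
           (set_pc i Top (G\<lparr>cl := (cl G)(i := (q, Pl \<union> Ms))\<rparr>))"
  \<comment> \<open>return: client[i] <- actStep(client[i], <y>); return y\<close>
| sm_ret: "\<lbrakk> pc (loc G i) = Top; cl G i = (c, Pl);
             delta P i c (Inr (ARet y)) = Some (q, Ms) \<rbrakk>
     \<Longrightarrow> sm_pstep P i G (Some (i, ARet y))
           (set_pc i Idle (G\<lparr>cl := (cl G)(i := (q, Pl \<union> Ms))\<rparr>))"
  \<comment> \<open>no return possible: start client[i] <- internalStep(i)\<close>
| sm_noret: "\<lbrakk> pc (loc G i) = Top; \<forall>y. delta P i (fst (cl G i)) (Inr (ARet y)) = None \<rbrakk>
     \<Longrightarrow> sm_pstep P i G None (set_pc i (RdCl i 0 {}) G)"
| sm_rdcl: "\<lbrakk> pc (loc G i) = RdCl t k acc; k < nclients P \<rbrakk>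
     \<Longrightarrow> sm_pstep P i G None
           (set_pc i (RdCl t (Suc k) (acc \<union> {msg \<in> snd (cl G k). dst msg = t})) G)"
| sm_rdcl_end: "\<lbrakk> pc (loc G i) = RdCl t k acc; \<not> k < nclients P \<rbrakk>
     \<Longrightarrow> sm_pstep P i G None (set_pc i (RdSv t (nclients P) 0 None acc) G)"
| sm_rdsv: "\<lbrakk> pc (loc G i) = RdSv t k i' best acc; k < nclients P + nservers P;
              i' < nclients P \<rbrakk>
     \<Longrightarrow> sm_pstep P i G None
           (set_pc i (RdSv t k (Suc i') (upd_best best (sv G i' k)) acc) G)"
| sm_rdsv_next: "\<lbrakk> pc (loc G i) = RdSv t k i' best acc; k < nclients P + nservers P;
                   \<not> i' < nclients P \<rbrakk>
     \<Longrightarrow> sm_pstep P i G None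
           (set_pc i (RdSv t (Suc k) 0 None
              (acc \<union> {msg \<in> (case best of None \<Rightarrow> {} | Some (_, Pl) \<Rightarrow> Pl). dst msg = t})) G)"
| sm_rdsv_end: "\<lbrakk> pc (loc G i) = RdSv t k i' best acc; \<not> k < nclients P + nservers P \<rbrakk>
     \<Longrightarrow> sm_pstep P i G None (set_pc i (Compute t acc) G)"
  \<comment> \<open>client target (t = i): write client[i] <- internalStep(i), then start the for loop\<close>
| sm_comp_client: "\<lbrakk> pc (loc G i) = Compute t acc; t < nclients P; cl G t = (c, Pl);
                     delta P t c (Inl acc) = Some (q, Ms') \<rbrakk>
     \<Longrightarrow> sm_pstep P i G None
           (set_pc i (SvLoop (nclients P)) (G\<lparr>cl := (cl G)(t := (q, Pl \<union> Ms'))\<rparr>))"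
  \<comment> \<open>server target j: s <- internalStep(j); r[j]++; resolved[j] <- false;
      invoke SA[j][r[j]].propose(s)\<close>
| sm_comp_server: "\<lbrakk> pc (loc G i) = Compute j acc; \<not> j < nclients P;
                     sv G i j = (c, Pl, sn);
                     delta P j c (Inl acc) = Some (q, Ms');
                     r' = Suc (rnd (loc G i) j) \<rbrakk>
     \<Longrightarrow> sm_pstep P i G None
           (upd_sa j r' (\<lambda>A. A\<lparr>proposed := insert (q, Pl \<union> Ms') (proposed A),
                                pendP := insert i (pendP A)\<rparr>)
             (G\<lparr>loc := (loc G)(i := (loc G i)\<lparr>pc := PropRet j,
                   resolved := (resolved (loc G i))(j := False),
                   rnd := (rnd (loc G i))(j := r')\<rparr>)\<rparr>))"
| sm_propret: "\<lbrakk> pc (loc G i) = PropRet j \<rbrakk>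
     \<Longrightarrow> sm_pstep P i G None
           (set_pc i (SvLoop (Suc j))
              (upd_sa j (rnd (loc G i) j) (\<lambda>A. A\<lparr>pendP := pendP A - {i}\<rparr>) G))"
| sm_loop_end: "\<lbrakk> pc (loc G i) = SvLoop j; \<not> j < nclients P + nservers P \<rbrakk>
     \<Longrightarrow> sm_pstep P i G None (set_pc i Top G)"
| sm_loop_prop: "\<lbrakk> pc (loc G i) = SvLoop j; j < nclients P + nservers P;
                   resolved (loc G i) j \<rbrakk>
     \<Longrightarrow> sm_pstep P i G None (set_pc i (RdCl j 0 {}) G)"
  \<comment> \<open>invoke SA[j][r[j]].resolve()\<close>
| sm_loop_res: "\<lbrakk> pc (loc G i) = SvLoop j; j < nclients P + nservers P;
                  \<not> resolved (loc G i) j \<rbrakk>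
     \<Longrightarrow> sm_pstep P i G None
           (set_pc i (ResRet j)
              (upd_sa j (rnd (loc G i) j)
                 (\<lambda>A. A\<lparr>liveR := (if pendP A = {} then insert i (liveR A) else liveR A - {i})\<rparr>) G))"
  \<comment> \<open>resolve returns bottom (only allowed if some propose was pending at its invocation)\<close>
| sm_res_bot: "\<lbrakk> pc (loc G i) = ResRet j; i \<notin> liveR (sa G j (rnd (loc G i) j)) \<rbrakk>
     \<Longrightarrow> sm_pstep P i G None (set_pc i (SvLoop (Suc j)) G)"
  \<comment> \<open>resolve returns a value v: validity and agreement\<close>
| sm_res_val: "\<lbrakk> pc (loc G i) = ResRet j; A = sa G j (rnd (loc G i) j);
                 v \<in> proposed A; decided A = None \<or> decided A = Some v \<rbrakk>
     \<Longrightarrow> sm_pstep P i G None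
           (upd_sa j (rnd (loc G i) j) (\<lambda>A. A\<lparr>decided := Some v, liveR := liveR A - {i}\<rparr>)
             (G\<lparr>loc := (loc G)(i := (loc G i)\<lparr>pc := WrSv j v,
                   resolved := (resolved (loc G i))(j := True)\<rparr>)\<rparr>))"
  \<comment> \<open>server[i][j] <- (s, r[j])\<close>
| sm_wrsv: "\<lbrakk> pc (loc G i) = WrSv j v \<rbrakk>
     \<Longrightarrow> sm_pstep P i G None
           (set_pc i (SvLoop (Suc j))
              (G\<lparr>sv := (sv G)(i := (sv G i)(j := (fst v, snd v, rnd (loc G i) j)))\<rparr>))"

definition sm_step :: "('q, 'v, 'mth, 'arg, 'ret) mp_impl \<Rightarrow> ('q, 'v) sm_gstate \<Rightarrow>
    ('mth, 'arg, 'ret) lab \<Rightarrow> ('q, 'v) sm_gstate \<Rightarrow> bool" where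
  "sm_step P G l G' \<longleftrightarrow> (\<exists>i < nclients P. sm_pstep P i G l G')"

end

theory Submission imports Defs begin

definition Dv :: "('q,'v,'mth,'arg,'ret) mp_impl \<Rightarrow> ('q,'v) sm_gstate \<Rightarrow> nat \<Rightarrow> nat \<Rightarrow> ('q \<times> 'v msg set) option" where
  "Dv P G k r = (if r = 0 then Some (s0 P, {}) else decided (sa G k r))"

definition AllPools :: "('q,'v,'mth,'arg,'ret) mp_impl \<Rightarrow> ('q,'v) sm_gstate \<Rightarrow> 'v msg set" where
  "AllPools P G = (\<Union>k<nclients P. snd (cl G k)) \<union>
     {x. \<exists>k r v. nclients P \<le> k \<and> k < nclients P + nservers P \<and> Dv P G k r = Some v \<and> x \<in> snd v}"

definition propOK :: "('q,'v,'mth,'arg,'ret) mp_impl \<Rightarrow> ('q,'v) sm_gstate \<Rightarrow> nat \<Rightarrow> nat \<Rightarrow> ('q \<times> 'v msg set) \<Rightarrow> bool" where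
  "propOK P G k r v = (nclients P \<le> k \<and> k < nclients P + nservers P \<and>
     (\<exists>c Pl acc q Ms'. Dv P G k r = Some (c,Pl) \<and> delta P k c (Inl acc) = Some (q,Ms') \<and>
        v = (q, Pl \<union> Ms') \<and> (\<forall>msg\<in>acc. dst msg = k) \<and> acc \<subseteq> AllPools P G))"

definition invA :: "('q,'v,'mth,'arg,'ret) mp_impl \<Rightarrow> ('q,'v) sm_gstate \<Rightarrow> bool" where
  "invA P G = ((\<forall>k. proposed (sa G k 0) = {}) \<and>
     (\<forall>k r v. decided (sa G k r) = Some v \<longrightarrow> v \<in> proposed (sa G k r)) \<and>
     (\<forall>k r v. v \<in> proposed (sa G k (Suc r)) \<longrightarrow> propOK P G k r v))"

definition invB :: "('q,'v,'mth,'arg,'ret) mp_impl \<Rightarrow> ('q,'v) sm_gstate \<Rightarrow> bool" where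
  "invB P G = (\<forall>i k. Dv P G k (snd (snd (sv G i k))) = Some (fst (sv G i k), fst (snd (sv G i k))))"

definition accOK :: "('q,'v,'mth,'arg,'ret) mp_impl \<Rightarrow> ('q,'v) sm_gstate \<Rightarrow> nat \<Rightarrow> 'v msg set \<Rightarrow> bool" where
  "accOK P G t acc = (acc \<subseteq> AllPools P G \<and> (\<forall>msg\<in>acc. dst msg = t))"

definition goodT :: "('q,'v,'mth,'arg,'ret) mp_impl \<Rightarrow> ('q,'v) lstate \<Rightarrow> nat \<Rightarrow> nat \<Rightarrow> bool" where
  "goodT P L i t = (t = i \<or> (nclients P \<le> t \<and> t < nclients P + nservers P \<and> resolved L t))"

definition pcOK :: "('q,'v,'mth,'arg,'ret) mp_impl \<Rightarrow> ('q,'v) sm_gstate \<Rightarrow> nat \<Rightarrow> bool" where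
  "pcOK P G i = (case pc (loc G i) of
     Idle \<Rightarrow> \<not> pending P i (fst (cl G i))
   | Top \<Rightarrow> True
   | RdCl t k acc \<Rightarrow> goodT P (loc G i) i t \<and> accOK P G t acc
   | RdSv t k i' best acc \<Rightarrow> goodT P (loc G i) i t \<and> accOK P G t acc \<and> nclients P \<le> k \<and>
        (\<forall>b Pl. best = Some (b, Pl) \<longrightarrow> Pl \<subseteq> AllPools P G)
   | Compute t acc \<Rightarrow> goodT P (loc G i) i t \<and> accOK P G t acc
   | PropRet j \<Rightarrow> nclients P \<le> j
   | SvLoop j \<Rightarrow> nclients P \<le> j
   | ResRet j \<Rightarrow> nclients P \<le> j
   | WrSv j v \<Rightarrow> nclients P \<le> j \<and> resolved (loc G i) j \<and> Dv P G j (rnd (loc G i) j) = Some v)"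

definition svOK :: "('q,'v,'mth,'arg,'ret) mp_impl \<Rightarrow> ('q,'v) sm_gstate \<Rightarrow> nat \<Rightarrow> bool" where
  "svOK P G i = (\<forall>k. resolved (loc G i) k \<and> (\<forall>v. pc (loc G i) \<noteq> WrSv k v) \<longrightarrow>
      Dv P G k (rnd (loc G i) k) = Some (fst (sv G i k), fst (snd (sv G i k))))"

definition Inv :: "('q,'v,'mth,'arg,'ret) mp_impl \<Rightarrow> ('q,'v) sm_gstate \<Rightarrow> bool" where
  "Inv P G = (invA P G \<and> invB P G \<and> (\<forall>i<nclients P. pcOK P G i \<and> svOK P G i))"

lemma set_pc_simps[simp]:
  "cl (set_pc i p G) = cl G" "sv (set_pc i p G) = sv G" "sa (set_pc i p G) = sa G"
  "loc (set_pc i p G) = (loc G)(i := (loc G i)\<lparr>pc := p\<rparr>)"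
  by (simp_all add: set_pc_def)

lemma upd_sa_simps[simp]:
  "cl (upd_sa j r f G) = cl G" "sv (upd_sa j r f G) = sv G" "loc (upd_sa j r f G) = loc G"
  "sa (upd_sa j r f G) = (sa G)(j := (sa G j)(r := f (sa G j r)))"
  by (simp_all add: upd_sa_def)

lemma Dv_cong: "sa G' = sa G \<Longrightarrow> Dv P G' = Dv P G"
  by (simp add: Dv_def fun_eq_iff)

lemma AllPools_cong: "sa G' = sa G \<Longrightarrow> cl G' = cl G \<Longrightarrow> AllPools P G' = AllPools P G"
  unfolding AllPools_def Dv_def by simp

lemma Dv_upd_sa_same:
  "(\<And>A. decided (f A) = decided A) \<Longrightarrow> Dv P (upd_sa j r f G) = Dv P G"
  by (simp add: Dv_def fun_eq_iff)

lemma step_mono: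
  assumes st: "sm_pstep P i G l G'"
  shows "(\<forall>k r x. Dv P G k r = Some x \<longrightarrow> Dv P G' k r = Some x) \<and> (\<forall>k. snd (cl G k) \<subseteq> snd (cl G' k))"
  using st
  apply (cases rule: sm_pstep.cases)
  by (simp only:, auto simp: Dv_def)+

lemma AllPools_mono:
  assumes "\<forall>k r x. Dv P G k r = Some x \<longrightarrow> Dv P G' k r = Some x" "\<forall>k. snd (cl G k) \<subseteq> snd (cl G' k)"
  shows "AllPools P G \<subseteq> AllPools P G'"
  using assms unfolding AllPools_def by (smt (verit) Un_iff UN_iff mem_Collect_eq subsetD subsetI)


definition Dmono :: "('q,'v,'mth,'arg,'ret) mp_impl \<Rightarrow> ('q,'v) sm_gstate \<Rightarrow> ('q,'v) sm_gstate \<Rightarrow> bool" where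
  "Dmono P G G' = (\<forall>k r x. Dv P G k r = Some x \<longrightarrow> Dv P G' k r = Some x)"

lemma propOK_mono:
  assumes "propOK P G k r v" "Dmono P G G'" "AllPools P G \<subseteq> AllPools P G'"
  shows "propOK P G' k r v"
proof -
  from assms(1) obtain c Pl acc q Ms' where h: "nclients P \<le> k" "k < nclients P + nservers P"
    "Dv P G k r = Some (c,Pl)" "delta P k c (Inl acc) = Some (q,Ms')"
        "v = (q, Pl \<union> Ms')" "\<forall>msg\<in>acc. dst msg = k" "acc \<subseteq> AllPools P G"
    unfolding propOK_def by blast
  have "Dv P G' k r = Some (c,Pl)" using h(3) assms(2) unfolding Dmono_def by blast
  moreover have "acc \<subseteq> AllPools P G'" using h(7) assms(3) by blast
  ultimately show ?thesis using h unfolding propOK_def by blast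
qed

lemma invA_same:
  assumes "invA P G" "Dmono P G G'" "AllPools P G \<subseteq> AllPools P G'"
    "\<And>k r. proposed (sa G' k r) = proposed (sa G k r)" "\<And>k r. decided (sa G' k r) = decided (sa G k r)"
  shows "invA P G'"
  using assms propOK_mono[OF _ assms(2,3)] unfolding invA_def by metis

lemma invB_same:
  assumes "invB P G" "Dmono P G G'" "sv G' = sv G"
  shows "invB P G'"
  using assms unfolding invB_def Dmono_def by metis

lemma accOK_mono: "accOK P G t acc \<Longrightarrow> AllPools P G \<subseteq> AllPools P G' \<Longrightarrow> accOK P G' t acc"
  unfolding accOK_def by blast

lemma frame_proc:
  assumes "pcOK P G j" "svOK P G j" "Dmono P G G'" "AllPools P G \<subseteq> AllPools P G'"
    "loc G' j = loc G j" "cl G' j = cl G j" "sv G' j = sv G j"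
  shows "pcOK P G' j \<and> svOK P G' j"
proof
  show "svOK P G' j" using assms(2,3,5,7) unfolding svOK_def Dmono_def by metis
  show "pcOK P G' j"
  proof (cases "pc (loc G j)")
    case (RdCl t k acc)
    then show ?thesis using assms(1,4,5) accOK_mono[OF _ assms(4)] by (simp add: pcOK_def)
  next
    case (RdSv t k i' best acc)
    then show ?thesis using assms(1,4,5) accOK_mono[OF _ assms(4)] by (simp add: pcOK_def) blast
  next
    case (Compute t acc)
    then show ?thesis using assms(1,4,5) accOK_mono[OF _ assms(4)] by (simp add: pcOK_def)
  next
    case (WrSv k v)
    then show ?thesis using assms(1,3,5) by (cases v) (simp add: pcOK_def Dmono_def)
  qed (use assms(1,5,6) in \<open>simp_all add: pcOK_def\<close>)
qed

lemma inv_intro: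
  assumes "Inv P G" "Dmono P G G'" "AllPools P G \<subseteq> AllPools P G'" "i < nclients P"
    "invA P G'" "invB P G'" "pcOK P G' i" "svOK P G' i"
    "\<And>j. j \<noteq> i \<Longrightarrow> loc G' j = loc G j \<and> cl G' j = cl G j \<and> sv G' j = sv G j"
  shows "Inv P G'"
proof -
  have "pcOK P G' j \<and> svOK P G' j" if j: "j < nclients P" for j
  proof (cases "j = i")
    case True then show ?thesis using assms(7,8) by simp
  next
    case False
    then show ?thesis using frame_proc[OF _ _ assms(2,3)] assms(1,9) j unfolding Inv_def by blast
  qed
  then show ?thesis using assms(5,6) unfolding Inv_def by blast
qed

lemma step_Dmono: "sm_pstep P i G l G' \<Longrightarrow> Dmono P G G'"
  using step_mono unfolding Dmono_def by blast
lemma step_AP: "sm_pstep P i G l G' \<Longrightarrow> AllPools P G \<subseteq> AllPools P G'"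
  using step_mono[of P i G l G'] AllPools_mono[of P G G'] by blast


lemma Dv_upd_simps[simp]:
  "Dv P (set_pc i p G) = Dv P G" "Dv P (G\<lparr>cl := X\<rparr>) = Dv P G"
  "Dv P (G\<lparr>sv := Y\<rparr>) = Dv P G" "Dv P (G\<lparr>loc := Z\<rparr>) = Dv P G"
  by (simp_all add: Dv_def fun_eq_iff)

lemma cl_in_AP: "k < nclients P \<Longrightarrow> snd (cl G k) \<subseteq> AllPools P G"
  unfolding AllPools_def by blast

lemma Dv_in_AP: "nclients P \<le> k \<Longrightarrow> k < nclients P + nservers P \<Longrightarrow> Dv P G k r = Some v \<Longrightarrow> snd v \<subseteq> AllPools P G"
  unfolding AllPools_def by blast

lemma sv_in_AP: "invB P G \<Longrightarrow> nclients P \<le> k \<Longrightarrow> k < nclients P + nservers P \<Longrightarrow> fst (snd (sv G i' k)) \<subseteq> AllPools P G"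
  unfolding invB_def using Dv_in_AP[of P k G "snd (snd (sv G i' k))"] by fastforce

lemma upd_best_cases: "upd_best best e = Some (b, Pl) \<Longrightarrow> best = Some (b, Pl) \<or> Pl = fst (snd e)"
  unfolding upd_best_def by (auto split: option.splits if_splits)

lemma easy:
  assumes inv: "Inv P G" and i: "i < nclients P" and DM: "Dmono P G G'" and AP: "AllPools P G \<subseteq> AllPools P G'"
    and pr: "\<And>k r. proposed (sa G' k r) = proposed (sa G k r)"
    and de: "\<And>k r. decided (sa G' k r) = decided (sa G k r)"
    and svs: "sv G' = sv G" and oth: "\<And>j. j \<noteq> i \<Longrightarrow> loc G' j = loc G j \<and> cl G' j = cl G j"
    and res: "resolved (loc G' i) = resolved (loc G i)" and rn: "rnd (loc G' i) = rnd (loc G i)"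
    and w1: "\<And>k v. pc (loc G i) \<noteq> WrSv k v" and w2: "\<And>k v. pc (loc G' i) \<noteq> WrSv k v"
    and pO: "pcOK P G' i"
  shows "Inv P G'"
proof (rule inv_intro[OF inv DM AP i])
  from inv i have iA: "invA P G" and iB: "invB P G" and sO: "svOK P G i"
    unfolding Inv_def by auto
  show "invA P G'" by (rule invA_same[OF iA DM AP pr de])
  show "invB P G'" by (rule invB_same[OF iB DM svs])
  show "pcOK P G' i" by (rule pO)
  show "svOK P G' i" unfolding svOK_def
  proof (intro allI impI)
    fix k assume "resolved (loc G' i) k \<and> (\<forall>v. pc (loc G' i) \<noteq> WrSv k v)"
    then have "Dv P G k (rnd (loc G i) k) = Some (fst (sv G i k), fst (snd (sv G i k)))"
      using sO w1 res unfolding svOK_def by simp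
    then show "Dv P G' k (rnd (loc G' i) k) = Some (fst (sv G' i k), fst (snd (sv G' i k)))"
      using DM rn svs unfolding Dmono_def by simp
  qed
  show "\<And>j. j \<noteq> i \<Longrightarrow> loc G' j = loc G j \<and> cl G' j = cl G j \<and> sv G' j = sv G j"
    using oth svs by simp
qed

lemma inv_step:
  assumes pw: "pending_wf P" and inv: "Inv P G" and i: "i < nclients P" and st: "sm_pstep P i G l G'"
  shows "Inv P G'"
proof -
  have DM: "Dmono P G G'" using st by (rule step_Dmono)
  have AP: "AllPools P G \<subseteq> AllPools P G'" using st by (rule step_AP)
  from inv i have iA: "invA P G" and iB: "invB P G" and pO: "pcOK P G i" and sO: "svOK P G i"
    unfolding Inv_def by auto
  note E = easy[OF inv i DM AP]
  from st show ?thesis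
  proof cases
    case (sm_call c Pl M x q Ms)
    have "pcOK P G' i" by (simp add: sm_call pcOK_def)
    then show ?thesis by (intro E) (simp_all add: sm_call)
  next
    case (sm_ret c Pl y q Ms)
    have "\<not> pending P i q" using pw i sm_ret unfolding pending_wf_def by blast
    then have "pcOK P G' i" by (simp add: sm_ret pcOK_def)
    then show ?thesis by (intro E) (simp_all add: sm_ret)
  next
    case sm_noret
    have "pcOK P G' i" by (simp add: sm_noret pcOK_def goodT_def accOK_def)
    then show ?thesis by (intro E) (simp_all add: sm_noret)
  next
    case (sm_rdcl t k acc)
    have h: "goodT P (loc G i) i t \<and> accOK P G t acc" using pO sm_rdcl by (simp add: pcOK_def)
    have "snd (cl G k) \<subseteq> AllPools P G" using cl_in_AP sm_rdcl by blast
    then have "accOK P G' t (acc \<union> {msg \<in> snd (cl G k). dst msg = t})"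
      using h AP unfolding accOK_def by blast
    then have "pcOK P G' i" using h by (simp add: sm_rdcl pcOK_def goodT_def)
    then show ?thesis by (intro E) (simp_all add: sm_rdcl)
  next
    case (sm_rdcl_end t k acc)
    have h: "goodT P (loc G i) i t \<and> accOK P G t acc" using pO sm_rdcl_end by (simp add: pcOK_def)
    then have "pcOK P G' i" using accOK_mono[OF _ AP] by (simp add: sm_rdcl_end pcOK_def goodT_def)
    then show ?thesis by (intro E) (simp_all add: sm_rdcl_end)
  next
    case (sm_rdsv t k i' best acc)
    have h: "goodT P (loc G i) i t \<and> accOK P G t acc \<and> nclients P \<le> k \<and>
        (\<forall>b Pl. best = Some (b, Pl) \<longrightarrow> Pl \<subseteq> AllPools P G)" using pO sm_rdsv by (simp add: pcOK_def)
    have "fst (snd (sv G i' k)) \<subseteq> AllPools P G" using sv_in_AP[OF iB] h sm_rdsv by blast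
    then have "\<forall>b Pl. upd_best best (sv G i' k) = Some (b, Pl) \<longrightarrow> Pl \<subseteq> AllPools P G'"
      using h AP upd_best_cases by blast
    then have "pcOK P G' i" using h accOK_mono[OF _ AP] by (simp add: sm_rdsv pcOK_def goodT_def)
    then show ?thesis by (intro E) (simp_all add: sm_rdsv)
  next
    case (sm_rdsv_next t k i' best acc)
    have h: "goodT P (loc G i) i t \<and> accOK P G t acc \<and> nclients P \<le> k \<and>
        (\<forall>b Pl. best = Some (b, Pl) \<longrightarrow> Pl \<subseteq> AllPools P G)" using pO sm_rdsv_next by (simp add: pcOK_def)
    have "(case best of None \<Rightarrow> {} | Some (_, Pl) \<Rightarrow> Pl) \<subseteq> AllPools P G"
      using h by (auto split: option.splits)
    then have "accOK P G' t (acc \<union> {msg \<in> (case best of None \<Rightarrow> {} | Some (_, Pl) \<Rightarrow> Pl). dst msg = t})"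
      using h AP unfolding accOK_def by blast
    then have "pcOK P G' i" using h by (simp add: sm_rdsv_next pcOK_def goodT_def)
    then show ?thesis by (intro E) (simp_all add: sm_rdsv_next)
  next
    case (sm_rdsv_end t k i' best acc)
    have h: "goodT P (loc G i) i t \<and> accOK P G t acc" using pO sm_rdsv_end by (simp add: pcOK_def)
    then have "pcOK P G' i" using accOK_mono[OF _ AP] by (simp add: sm_rdsv_end pcOK_def goodT_def)
    then show ?thesis by (intro E) (simp_all add: sm_rdsv_end)
  next
    case (sm_comp_client t acc c Pl q Ms')
    have h: "goodT P (loc G i) i t" using pO sm_comp_client by (simp add: pcOK_def)
    then have ti: "t = i" using sm_comp_client unfolding goodT_def by auto
    have "pcOK P G' i" by (simp add: sm_comp_client pcOK_def)
    then show ?thesis by (intro E) (simp_all add: sm_comp_client ti)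
  next
    case (sm_propret j)
    have "pcOK P G' i" using pO sm_propret by (simp add: pcOK_def)
    then show ?thesis by (intro E) (simp_all add: sm_propret)
  next
    case (sm_loop_end j)
    have "pcOK P G' i" using pO sm_loop_end by (simp add: pcOK_def)
    then show ?thesis by (intro E) (simp_all add: sm_loop_end)
  next
    case (sm_loop_prop j)
    have "pcOK P G' i" using pO sm_loop_prop by (simp add: pcOK_def goodT_def accOK_def)
    then show ?thesis by (intro E) (simp_all add: sm_loop_prop)
  next
    case (sm_loop_res j)
    have "pcOK P G' i" using pO sm_loop_res by (simp add: pcOK_def)
    then show ?thesis by (intro E) (simp_all add: sm_loop_res)
  next
    case (sm_res_bot j)
    have "pcOK P G' i" using pO sm_res_bot by (simp add: pcOK_def)
    then show ?thesis by (intro E) (simp_all add: sm_res_bot)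
  next
    case (sm_comp_server j acc c Pl sn q Ms' r')
    have h: "goodT P (loc G i) i j \<and> accOK P G j acc" using pO sm_comp_server by (simp add: pcOK_def)
    then have jr: "nclients P \<le> j" "j < nclients P + nservers P" "resolved (loc G i) j"
      using sm_comp_server i unfolding goodT_def by auto
    have Dj: "Dv P G j (rnd (loc G i) j) = Some (c, Pl)"
      using sO jr sm_comp_server unfolding svOK_def by auto
    have DvEq: "Dv P G' = Dv P G" by (simp add: sm_comp_server Dv_def fun_eq_iff)
    have new: "propOK P G' j (rnd (loc G i) j) (q, Pl \<union> Ms')"
      unfolding propOK_def DvEq using jr Dj sm_comp_server h AP unfolding accOK_def by blast
    have "invA P G'" unfolding invA_def
    proof (intro conjI allI impI)
      fix k show "proposed (sa G' k 0) = {}" using iA sm_comp_server unfolding invA_def by simp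
    next
      fix k r v assume d: "decided (sa G' k r) = Some v"
      have "decided (sa G' k r) = decided (sa G k r)" by (simp add: sm_comp_server)
      then have "v \<in> proposed (sa G k r)" using d iA unfolding invA_def by metis
      moreover have "proposed (sa G k r) \<subseteq> proposed (sa G' k r)" by (auto simp add: sm_comp_server)
      ultimately show "v \<in> proposed (sa G' k r)" by blast
    next
      fix k r v assume a: "v \<in> proposed (sa G' k (Suc r))"
      show "propOK P G' k r v"
      proof (cases "k = j \<and> r = rnd (loc G i) j \<and> v = (q, Pl \<union> Ms')")
        case True then show ?thesis using new by simp
      next
        case False
        then have "v \<in> proposed (sa G k (Suc r))" using a sm_comp_server by (auto split: if_splits)
        then show ?thesis using iA propOK_mono[OF _ DM AP] unfolding invA_def by blast
      qed
    qed
    moreover have "invB P G'" by (rule invB_same[OF iB DM]) (simp add: sm_comp_server)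
    moreover have "pcOK P G' i" using jr by (simp add: sm_comp_server pcOK_def)
    moreover have "svOK P G' i" using sO unfolding svOK_def DvEq by (simp add: sm_comp_server)
    ultimately show ?thesis by (intro inv_intro[OF inv DM AP i]) (simp_all add: sm_comp_server)
  next
    case (sm_res_val j A v)
    let ?r = "rnd (loc G i) j"
    have mj: "nclients P \<le> j" using pO sm_res_val by (simp add: pcOK_def)
    have r0: "?r \<noteq> 0" using iA sm_res_val unfolding invA_def by (metis empty_iff)
    have prs: "\<And>k r. proposed (sa G' k r) = proposed (sa G k r)" by (simp add: sm_res_val)
    have dec: "\<And>k r. decided (sa G' k r) = (if k = j \<and> r = ?r then Some v else decided (sa G k r))"
      by (simp add: sm_res_val)
    have "invA P G'" unfolding invA_def
    proof (intro conjI allI impI)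
      fix k show "proposed (sa G' k 0) = {}" using iA prs unfolding invA_def by simp
    next
      fix k r w assume d: "decided (sa G' k r) = Some w"
      show "w \<in> proposed (sa G' k r)"
      proof (cases "k = j \<and> r = ?r")
        case True then show ?thesis using d dec prs sm_res_val by simp
      next
        case False
        then have "decided (sa G k r) = Some w" using d dec[of k r] by (simp only: if_False)
        then show ?thesis using iA prs unfolding invA_def by metis
      qed
    next
      fix k r w assume a: "w \<in> proposed (sa G' k (Suc r))"
      then show "propOK P G' k r w" using iA prs propOK_mono[OF _ DM AP] unfolding invA_def by metis
    qed
    moreover have "invB P G'" by (rule invB_same[OF iB DM]) (simp add: sm_res_val)
    moreover have "Dv P G' j ?r = Some v" using r0 dec unfolding Dv_def by simp
    then have "pcOK P G' i" using mj by (simp add: sm_res_val pcOK_def)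
    moreover have "svOK P G' i" unfolding svOK_def
    proof (intro allI impI)
      fix k assume a: "resolved (loc G' i) k \<and> (\<forall>w. pc (loc G' i) \<noteq> WrSv k w)"
      then have kj: "k \<noteq> j" by (simp add: sm_res_val)
      then have "Dv P G k (rnd (loc G i) k) = Some (fst (sv G i k), fst (snd (sv G i k)))"
        using a sO sm_res_val unfolding svOK_def by simp
      then show "Dv P G' k (rnd (loc G' i) k) = Some (fst (sv G' i k), fst (snd (sv G' i k)))"
        using DM kj unfolding Dmono_def by (simp add: sm_res_val)
    qed
    ultimately show ?thesis by (intro inv_intro[OF inv DM AP i]) (simp_all add: sm_res_val)
  next
    case (sm_wrsv j v)
    let ?r = "rnd (loc G i) j"
    have h: "nclients P \<le> j" "resolved (loc G i) j" "Dv P G j ?r = Some v"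
      using pO sm_wrsv by (simp_all add: pcOK_def)
    have "invA P G'" by (rule invA_same[OF iA DM AP]) (simp_all add: sm_wrsv)
    moreover have "invB P G'" using iB h(3) unfolding invB_def by (simp add: sm_wrsv)
    moreover have "pcOK P G' i" using h by (simp add: sm_wrsv pcOK_def)
    moreover have "svOK P G' i" unfolding svOK_def
    proof (intro allI impI)
      fix k assume a: "resolved (loc G' i) k \<and> (\<forall>w. pc (loc G' i) \<noteq> WrSv k w)"
      show "Dv P G' k (rnd (loc G' i) k) = Some (fst (sv G' i k), fst (snd (sv G' i k)))"
      proof (cases "k = j")
        case True then show ?thesis using h by (simp add: sm_wrsv)
      next
        case False
        then show ?thesis using a sO unfolding svOK_def by (simp add: sm_wrsv)
      qed
    qed
    ultimately show ?thesis by (intro inv_intro[OF inv DM AP i]) (simp_all add: sm_wrsv)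
  qed
qed


lemma inv_init: "pending_wf P \<Longrightarrow> Inv P (sm_init P)"
  unfolding Inv_def invA_def invB_def pcOK_def svOK_def pending_wf_def
  by (simp add: sm_init_def sa_init_def Dv_def)

definition Abs :: "('q,'v,'mth,'arg,'ret) mp_impl \<Rightarrow> ('q,'v) sm_gstate \<Rightarrow> ('q,'v) mp_gstate \<Rightarrow> bool" where
  "Abs P G g = ((\<forall>k<nclients P. g k = cl G k) \<and>
     (\<forall>k. nclients P \<le> k \<longrightarrow> (\<exists>R. Dv P G k R = Some (g k) \<and> Dv P G k (Suc R) = None)))"

lemma abs_init: "Abs P (sm_init P) (mp_init P)"
  unfolding Abs_def by (auto simp: sm_init_def mp_init_def sa_init_def Dv_def)

lemma chain1:
  assumes "Inv P G" "Dv P G k (Suc r) = Some v"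
  shows "\<exists>u. Dv P G k r = Some u \<and> snd u \<subseteq> snd v"
proof -
  have "decided (sa G k (Suc r)) = Some v" using assms(2) unfolding Dv_def by simp
  then have "v \<in> proposed (sa G k (Suc r))" using assms(1) unfolding Inv_def invA_def by blast
  then have "propOK P G k r v" using assms(1) unfolding Inv_def invA_def by blast
  then show ?thesis unfolding propOK_def by auto
qed

lemma chain_plus:
  assumes "Inv P G"
  shows "Dv P G k (r + d) = Some w \<Longrightarrow> \<exists>u. Dv P G k r = Some u \<and> snd u \<subseteq> snd w"
proof (induction d arbitrary: w)
  case 0 then show ?case by simp
next
  case (Suc d)
  then obtain u where "Dv P G k (r + d) = Some u" "snd u \<subseteq> snd w"
    using chain1[OF assms, of k "r + d" w] by auto
  then show ?case using Suc.IH by blast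
qed

lemma chain_le:
  assumes "Inv P G" "Dv P G k r' = Some w" "r \<le> r'"
  shows "\<exists>u. Dv P G k r = Some u \<and> snd u \<subseteq> snd w"
  using chain_plus[OF assms(1), of k r "r' - r" w] assms(2,3) by simp

lemma R_unique:
  assumes "Inv P G" "Dv P G k R = Some a" "Dv P G k (Suc R) = None"
     "Dv P G k r = Some b" "Dv P G k (Suc r) = None"
  shows "r = R"
proof (rule ccontr)
  assume "r \<noteq> R"
  then have "Suc r \<le> R \<or> Suc R \<le> r" by auto
  then show False
  proof
    assume "Suc r \<le> R" then show False using chain_le[OF assms(1,2)] assms(5) by fastforce
  next
    assume "Suc R \<le> r" then show False using chain_le[OF assms(1,4)] assms(3) by fastforce
  qed
qed

lemma AP_sub:
  assumes inv: "Inv P G" and ab: "Abs P G g"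
  shows "AllPools P G \<subseteq> (\<Union>k<nclients P + nservers P. snd (g k))"
proof
  fix x assume "x \<in> AllPools P G"
  then consider (c) k where "k < nclients P" "x \<in> snd (cl G k)"
    | (s) k r v where "nclients P \<le> k" "k < nclients P + nservers P" "Dv P G k r = Some v" "x \<in> snd v"
    unfolding AllPools_def by blast
  then show "x \<in> (\<Union>k<nclients P + nservers P. snd (g k))"
  proof cases
    case c
    then have "g k = cl G k" using ab unfolding Abs_def by blast
    then show ?thesis using c by (metis UN_iff lessThan_iff trans_less_add1)
  next
    case s
    obtain R where R: "Dv P G k R = Some (g k)" "Dv P G k (Suc R) = None" using ab s unfolding Abs_def by blast
    have "r \<le> R"
    proof (rule ccontr)
      assume "\<not> r \<le> R" then have "Suc R \<le> r" by simp
      then show False using chain_le[OF inv s(3)] R(2) by fastforce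
    qed
    then obtain u where "Dv P G k r = Some u" "snd u \<subseteq> snd (g k)" using chain_le[OF inv R(1)] by blast
    then show ?thesis using s by force
  qed
qed


lemma abs_same:
  assumes "Abs P G g" "cl G' = cl G" "Dv P G' = Dv P G"
  shows "Abs P G' g"
  using assms unfolding Abs_def by simp

lemma sim_step:
  assumes inv: "Inv P G" and ab: "Abs P G g" and i: "i < nclients P" and st: "sm_pstep P i G l G'"
  shows "\<exists>g'. Abs P G' g' \<and> ((g' = g \<and> l = None) \<or> (\<exists>a'. mp_step P g a' g' \<and> (l \<noteq> None \<longrightarrow> a' = l)))"
proof -
  from inv i have iA: "invA P G" and iB: "invB P G" and pO: "pcOK P G i" and sO: "svOK P G i"
    unfolding Inv_def by auto
  have gi: "g i = cl G i" using ab i unfolding Abs_def by blast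
  have stut: "\<exists>g'. Abs P G' g' \<and> ((g' = g \<and> l = None) \<or> (\<exists>a'. mp_step P g a' g' \<and> (l \<noteq> None \<longrightarrow> a' = l)))"
    if "l = None" "cl G' = cl G" "Dv P G' = Dv P G"
    using abs_same[OF ab that(2,3)] that(1) by blast
  from st show ?thesis
  proof cases
    case (sm_call c Pl M x q Ms)
    let ?g' = "g(i := (q, Pl \<union> Ms))"
    have "\<not> pending P i c" using pO sm_call by (simp add: pcOK_def)
    then have "mp_step P g (Some (i, ACall M x)) ?g'"
      using mp_call[of i P g c Pl M x q Ms] i gi sm_call by simp
    moreover have "Abs P G' ?g'" using ab i unfolding Abs_def by (auto simp: sm_call)
    ultimately show ?thesis using sm_call by blast
  next
    case (sm_ret c Pl y q Ms)
    let ?g' = "g(i := (q, Pl \<union> Ms))"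
    have "mp_step P g (Some (i, ARet y)) ?g'"
      using mp_ret[of i P g c Pl y q Ms] i gi sm_ret by simp
    moreover have "Abs P G' ?g'" using ab i unfolding Abs_def by (auto simp: sm_ret)
    ultimately show ?thesis using sm_ret by blast
  next
    case (sm_comp_client t acc c Pl q Ms')
    have h: "goodT P (loc G i) i t \<and> accOK P G t acc" using pO sm_comp_client by (simp add: pcOK_def)
    then have ti: "t = i" using sm_comp_client unfolding goodT_def by auto
    let ?g' = "g(i := (q, Pl \<union> Ms'))"
    have "acc \<subseteq> (\<Union>k<nclients P + nservers P. snd (g k))" using h AP_sub[OF inv ab] unfolding accOK_def by blast
    moreover have "\<forall>msg\<in>acc. dst msg = i" using h ti unfolding accOK_def by blast
    ultimately have "mp_step P g None ?g'"
      using mp_internal[of i P g c Pl acc q Ms'] i gi sm_comp_client ti by simp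
    moreover have "Abs P G' ?g'" using ab i ti unfolding Abs_def by (auto simp: sm_comp_client)
    ultimately show ?thesis using sm_comp_client by blast
  next
    case (sm_res_val j A v)
    let ?r = "rnd (loc G i) j"
    show ?thesis
    proof (cases "decided A = None")
      case False
      then have "decided A = Some v" using sm_res_val by metis
      then have "Dv P G' = Dv P G" using sm_res_val by (auto simp: Dv_def fun_eq_iff)
      then show ?thesis using stut sm_res_val by simp
    next
      case True
      have r0: "?r \<noteq> 0" using iA sm_res_val unfolding invA_def by (metis empty_iff)
      then obtain r where rr: "?r = Suc r" by (cases ?r) auto
      have "propOK P G j r v" using iA sm_res_val rr unfolding invA_def by metis
      then obtain c Pl acc q Ms' where p: "nclients P \<le> j" "j < nclients P + nservers P"
        "Dv P G j r = Some (c,Pl)" "delta P j c (Inl acc) = Some (q,Ms')"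
        "v = (q, Pl \<union> Ms')" "\<forall>msg\<in>acc. dst msg = j" "acc \<subseteq> AllPools P G"
        unfolding propOK_def by blast
      obtain R where R: "Dv P G j R = Some (g j)" "Dv P G j (Suc R) = None"
        using ab p(1) unfolding Abs_def by blast
      have Dn: "Dv P G j (Suc r) = None" using True sm_res_val rr unfolding Dv_def by simp
      have "r = R" using R_unique[OF inv R p(3) Dn] .
      then have gj: "g j = (c, Pl)" using R p(3) by simp
      let ?g' = "g(j := v)"
      have "mp_step P g None ?g'"
        using mp_internal[of j P g c Pl acc q Ms'] p gj AP_sub[OF inv ab] by auto
      moreover have "Abs P G' ?g'"
        unfolding Abs_def
      proof (intro conjI allI impI)
        fix k assume "k < nclients P"
        then show "?g' k = cl G' k" using ab p(1) unfolding Abs_def by (simp add: sm_res_val)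
      next
        fix k assume k: "nclients P \<le> k"
        show "\<exists>R. Dv P G' k R = Some (?g' k) \<and> Dv P G' k (Suc R) = None"
        proof (cases "k = j")
          case True
          have "Dv P G j (Suc (Suc r)) = None"
            using chain1[OF inv, of j "Suc r"] Dn by (cases "Dv P G j (Suc (Suc r))") auto
          then have "Dv P G' j (Suc (Suc r)) = None" using rr by (simp add: sm_res_val Dv_def)
          moreover have "Dv P G' j (Suc r) = Some v" using rr by (simp add: sm_res_val Dv_def)
          ultimately show ?thesis using True by auto
        next
          case False
          then obtain R' where "Dv P G k R' = Some (g k)" "Dv P G k (Suc R') = None"
            using ab k unfolding Abs_def by blast
          moreover have "\<And>r. Dv P G' k r = Dv P G k r" using False by (simp add: sm_res_val Dv_def)
          ultimately show ?thesis using False by auto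
        qed
      qed
      ultimately show ?thesis using sm_res_val by blast
    qed
  next
    case (sm_comp_server j acc c Pl sn q Ms' r')
    have "Dv P G' = Dv P G" by (simp add: sm_comp_server Dv_def fun_eq_iff)
    then show ?thesis using stut sm_comp_server by simp
  next
    case (sm_propret j)
    have "Dv P G' = Dv P G" by (simp add: sm_propret Dv_def fun_eq_iff)
    then show ?thesis using stut sm_propret by simp
  next
    case (sm_loop_res j)
    have "Dv P G' = Dv P G" by (simp add: sm_loop_res Dv_def fun_eq_iff)
    then show ?thesis using stut sm_loop_res by simp
  qed (use stut in simp_all)
qed

theorem theorem1:
  fixes P :: "('q, 'v, 'mth, 'arg, 'ret) mp_impl"
  assumes "pending_wf P"
  shows "refines (sm_step P) (sm_init P) (mp_step P) (mp_init P)"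
  unfolding refines_def
proof (rule exI[of _ "\<lambda>G g. Inv P G \<and> Abs P G g"])
  show "forward_simulation (sm_step P) (sm_init P) (mp_step P) (mp_init P) (\<lambda>G g. Inv P G \<and> Abs P G g)"
    unfolding forward_simulation_def
  proof (rule conjI)
    show "Inv P (sm_init P) \<and> Abs P (sm_init P) (mp_init P)" using inv_init[OF assms] abs_init by blast
  next
    show "\<forall>s1 a s1' s2. sm_step P s1 a s1' \<and> Inv P s1 \<and> Abs P s1 s2 \<longrightarrow>
        (\<exists>s2'. (Inv P s1' \<and> Abs P s1' s2') \<and>
         (s2' = s2 \<and> a = None \<or> (\<exists>a'. mp_step P s2 a' s2' \<and> (a \<noteq> None \<longrightarrow> a' = a))))"
    proof (intro allI impI)
    fix s1 a s1' s2
    assume h: "sm_step P s1 a s1' \<and> Inv P s1 \<and> Abs P s1 s2"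
    then obtain i where i: "i < nclients P" "sm_pstep P i s1 a s1'" unfolding sm_step_def by blast
    have "Inv P s1'" using inv_step[OF assms _ i(1) i(2)] h by blast
    then show "\<exists>s2'. (Inv P s1' \<and> Abs P s1' s2') \<and>
         (s2' = s2 \<and> a = None \<or> (\<exists>a'. mp_step P s2 a' s2' \<and> (a \<noteq> None \<longrightarrow> a' = a)))"
      using sim_step[of P s1 s2 i a s1'] h i by blast
    qed
  qed
qed

end
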